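(* Let $\bm{X},\bm{X}_\star\in\mathbb{R}^{n_1\times r}$ and $\bm{Y},\bm{Y}_\star\in\mathbb{R}^{n_2\times r}$ be arbitrary. Suppose there exists an invertible $\bm{Q}\in\mathbb{R}^{r\times r}$ minimizing $\|\bm{X}\bm{P}-\bm{X}_\star\|_{\mathrm{F}}^2+\|\bm{Y}\bm{P}^{-\top}-\bm{Y}_\star\|_{\mathrm{F}}^2$ over all invertible $\bm{P}\in\mathbb{R}^{r\times r}$. Let $\tilde{\bm{X}}=\bm{X}\bm{Q}$ and $\tilde{\bm{Y}}=\bm{Y}\bm{Q}^{-\top}$. Then \[ \tilde{\bm{X}}^\top(\tilde{\bm{X}}-\bm{X}_\star)=(\tilde{\bm{Y}}-\bm{Y}_\star)^\top\tilde{\bm{Y}}. \]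
   Context: $\bm{P}^{-\top}=(\bm{P}^{-1})^\top$. *)

theory Defs
  imports "HOL-Analysis.Analysis"
begin

definition frob_sq :: "real^'c^'r \<Rightarrow> real" where
  "frob_sq A = (\<Sum>i\<in>UNIV. \<Sum>j\<in>UNIV. (A $ i $ j)^2)"

definition balance_obj ::
  "real^'r^'n1 \<Rightarrow> real^'r^'n1 \<Rightarrow> real^'r^'n2 \<Rightarrow> real^'r^'n2 \<Rightarrow> real^'r^'r \<Rightarrow> real" where
  "balance_obj X Xs Y Ys P =
     frob_sq (X ** P - Xs) + frob_sq (Y ** transpose (matrix_inv P) - Ys)"

end

theory Submission
  imports Defs
begin

lemma matrix_inv_eqI:
  fixes A :: "real^'n^'n"
  assumes "A ** B = mat 1" "B ** A = mat 1"
  shows "matrix_inv A = B"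
proof -
  have "A ** matrix_inv A = mat 1 \<and> matrix_inv A ** A = mat 1"
    unfolding matrix_inv_def by (rule someI[of _ B]) (use assms in auto)
  then show ?thesis
    by (metis matrix_mul_assoc matrix_mul_lid matrix_mul_rid assms(1))
qed

definition emat :: "real \<Rightarrow> 'r \<Rightarrow> 'r \<Rightarrow> real^'r^'r" where
  "emat c k l = (\<chi> i j. (if i = j then 1 else 0) + (if i = k \<and> j = l then c else 0))"

lemma emat_mul:
  fixes A :: "real^'r^'m"
  shows "(A ** emat c k l) $ i $ j = A $ i $ j + (if j = l then c * A $ i $ k else 0)"
  by (simp add: matrix_matrix_mult_def emat_def distrib_left sum.distrib
      if_distrib[where f="\<lambda>x. _ * x"] cong: if_cong)

lemma emat_transpose: "transpose (emat c k l) = emat c l k"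
  by (simp add: transpose_def emat_def vec_eq_iff)

lemma emat_off:
  assumes "k \<noteq> l"
  shows "emat c k l ** emat (-c) k l = mat 1"
  using assms by (simp add: vec_eq_iff emat_mul mat_def) (auto simp: emat_def)

lemma emat_diag:
  assumes "(1 + c) * (1 + d) = 1"
  shows "emat c k k ** emat d k k = mat 1"
  using assms by (simp add: vec_eq_iff emat_mul mat_def) (auto simp: emat_def algebra_simps)

lemma key:
  fixes B V :: "real^'a^'m" and C W :: "real^'b^'n"
  assumes phi0: "\<phi> 0 = 0" and dphi: "(\<phi> has_real_derivative -1) (at 0)" and d: "d > 0"
    and F: "F = (\<lambda>t. (\<Sum>i\<in>UNIV. \<Sum>j\<in>UNIV. (B$i$j + t * V$i$j)^2)
                 + (\<Sum>i\<in>UNIV. \<Sum>j\<in>UNIV. (C$i$j + \<phi> t * W$i$j)^2))"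
    and min: "\<And>t. \<bar>t\<bar> < d \<Longrightarrow> F 0 \<le> F t"
  shows "(\<Sum>i\<in>UNIV. \<Sum>j\<in>UNIV. B$i$j * V$i$j) = (\<Sum>i\<in>UNIV. \<Sum>j\<in>UNIV. C$i$j * W$i$j)"
proof -
  have "(F has_real_derivative
     (\<Sum>i\<in>UNIV. \<Sum>j\<in>UNIV. 2 * (B$i$j + 0 * V$i$j) * V$i$j)
   + (\<Sum>i\<in>UNIV. \<Sum>j\<in>UNIV. 2 * (C$i$j + \<phi> 0 * W$i$j) * (-1 * W$i$j))) (at 0)"
    unfolding F
    apply (rule DERIV_add)
    apply (rule DERIV_sum, rule DERIV_sum)
    apply (auto intro!: derivative_eq_intros)[1]
    apply (rule DERIV_sum, rule DERIV_sum)
    apply (auto intro!: derivative_eq_intros dphi)[1]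
    done
  then have D: "(F has_real_derivative
     2 * (\<Sum>i\<in>UNIV. \<Sum>j\<in>UNIV. B$i$j * V$i$j) - 2 * (\<Sum>i\<in>UNIV. \<Sum>j\<in>UNIV. C$i$j * W$i$j)) (at 0)"
    by (simp add: phi0 sum_distrib_left sum_subtractf mult.assoc sum_negf)
  have "2 * (\<Sum>i\<in>UNIV. \<Sum>j\<in>UNIV. B$i$j * V$i$j) - 2 * (\<Sum>i\<in>UNIV. \<Sum>j\<in>UNIV. C$i$j * W$i$j) = 0"
    by (rule DERIV_local_min[OF D d]) (use min in auto)
  then show ?thesis by simp
qed

lemma obj_step:
  fixes X Xs :: "real^'r^'n1" and Y Ys :: "real^'r^'n2" and Q M N :: "real^'r^'r"
  assumes "invertible Q" "M ** N = mat 1" "N ** M = mat 1"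
  shows "invertible (Q ** M)"
    and "balance_obj X Xs Y Ys (Q ** M)
         = frob_sq ((X ** Q) ** M - Xs) + frob_sq ((Y ** transpose (matrix_inv Q)) ** transpose N - Ys)"
proof -
  have Q: "Q ** matrix_inv Q = mat 1" "matrix_inv Q ** Q = mat 1"
    using assms(1) unfolding invertible_def matrix_inv_def by (metis (mono_tags, lifting) someI)+
  have 1: "(Q ** M) ** (N ** matrix_inv Q) = mat 1"
    by (metis Q(1) assms(2) matrix_mul_assoc matrix_mul_rid)
  have 2: "(N ** matrix_inv Q) ** (Q ** M) = mat 1"
    by (metis Q(2) assms(3) matrix_mul_assoc matrix_mul_rid)
  show "invertible (Q ** M)" unfolding invertible_def using 1 2 by blast
  have "matrix_inv (Q ** M) = N ** matrix_inv Q" by (rule matrix_inv_eqI[OF 1 2])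
  then show "balance_obj X Xs Y Ys (Q ** M)
         = frob_sq ((X ** Q) ** M - Xs) + frob_sq ((Y ** transpose (matrix_inv Q)) ** transpose N - Ys)"
    by (simp add: balance_obj_def matrix_mul_assoc matrix_transpose_mul)
qed

lemma entry:
  fixes X Xs :: "real^'r^'n1" and Y Ys :: "real^'r^'n2" and Q :: "real^'r^'r"
  assumes invQ: "invertible Q"
    and opt: "\<And>P. invertible P \<Longrightarrow> balance_obj X Xs Y Ys Q \<le> balance_obj X Xs Y Ys P"
    and phi0: "\<phi> 0 = 0" and dphi: "(\<phi> has_real_derivative -1) (at 0)" and d: "d > 0"
    and inv: "\<And>t. \<bar>t\<bar> < d \<Longrightarrow> emat t k l ** emat (\<phi> t) k l = mat 1 \<and> emat (\<phi> t) k l ** emat t k l = mat 1"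
  shows "(\<Sum>i\<in>UNIV. (X ** Q - Xs)$i$l * (X ** Q)$i$k)
       = (\<Sum>i\<in>UNIV. (Y ** transpose (matrix_inv Q) - Ys)$i$k * (Y ** transpose (matrix_inv Q))$i$l)"
proof -
  define Xt where "Xt = X ** Q"
  define Yt where "Yt = Y ** transpose (matrix_inv Q)"
  define V where "V = (\<chi> i j. if j = l then Xt$i$k else 0 :: real^'r^'n1)"
  define W where "W = (\<chi> i j. if j = k then Yt$i$l else 0 :: real^'r^'n2)"
  define F where "F = (\<lambda>t. (\<Sum>i\<in>UNIV. \<Sum>j\<in>UNIV. ((Xt - Xs)$i$j + t * V$i$j)^2)
                 + (\<Sum>i\<in>UNIV. \<Sum>j\<in>UNIV. ((Yt - Ys)$i$j + \<phi> t * W$i$j)^2))"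
  have FP: "F t = balance_obj X Xs Y Ys (Q ** emat t k l)" if "\<bar>t\<bar> < d" for t
  proof -
    have "balance_obj X Xs Y Ys (Q ** emat t k l) =
       frob_sq (Xt ** emat t k l - Xs) + frob_sq (Yt ** emat (\<phi> t) l k - Ys)"
      using obj_step(2)[OF invQ, of "emat t k l" "emat (\<phi> t) k l" X Xs Y Ys] inv[OF that]
      by (simp add: Xt_def Yt_def emat_transpose)
    then show ?thesis
      by (simp add: F_def frob_sq_def emat_mul V_def W_def algebra_simps
          if_distrib[where f="\<lambda>x. _ * x"] cong: if_cong)
  qed
  have inv1: "invertible (Q ** emat t k l)" if "\<bar>t\<bar> < d" for t
    using obj_step(1)[OF invQ, of "emat t k l" "emat (\<phi> t) k l"] inv[OF that] by blast
  have e0: "emat 0 k l = mat 1" by (simp add: emat_def mat_def vec_eq_iff)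
  have "F 0 \<le> F t" if "\<bar>t\<bar> < d" for t
    using FP[OF that] FP[of 0] d opt[OF inv1[OF that]] by (simp add: e0)
  from key[OF phi0 dphi d F_def this]
  have "(\<Sum>i\<in>UNIV. \<Sum>j\<in>UNIV. (Xt - Xs)$i$j * V$i$j) = (\<Sum>i\<in>UNIV. \<Sum>j\<in>UNIV. (Yt - Ys)$i$j * W$i$j)" .
  then show ?thesis
    by (simp add: V_def W_def Xt_def Yt_def if_distrib[where f="\<lambda>x. _ * x"] cong: if_cong)
qed

theorem lemma2:
  fixes X Xs :: "real^'r^'n1" and Y Ys :: "real^'r^'n2" and Q :: "real^'r^'r"
  assumes "invertible Q"
    and "\<And>P. invertible P \<Longrightarrow> balance_obj X Xs Y Ys Q \<le> balance_obj X Xs Y Ys P"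
  shows "transpose (X ** Q) ** (X ** Q - Xs)
           = transpose (Y ** transpose (matrix_inv Q) - Ys) ** (Y ** transpose (matrix_inv Q))"
proof -
  have E: "(\<Sum>i\<in>UNIV. (X ** Q - Xs)$i$l * (X ** Q)$i$k)
       = (\<Sum>i\<in>UNIV. (Y ** transpose (matrix_inv Q) - Ys)$i$k * (Y ** transpose (matrix_inv Q))$i$l)"
    for k l
  proof (cases "k = l")
    case False
    show ?thesis
    proof (rule entry[OF assms, of "\<lambda>t. - t" 1])
      show "((\<lambda>t. - t) has_real_derivative -1) (at 0)" by (auto intro!: derivative_eq_intros)
      show "emat t k l ** emat (- t) k l = mat 1 \<and> emat (- t) k l ** emat t k l = mat 1" for t
        using emat_off[OF False, of t] emat_off[OF False, of "-t"] by simp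
    qed auto
  next
    case True
    show ?thesis unfolding True
    proof (rule entry[OF assms, of "\<lambda>t. 1 / (1 + t) - 1" "1/2"])
      show "((\<lambda>t. 1 / (1 + t) - 1) has_real_derivative -1) (at 0)"
        by (auto intro!: derivative_eq_intros simp: power2_eq_square)
      show "emat t l l ** emat (1 / (1 + t) - 1) l l = mat 1 \<and> emat (1 / (1 + t) - 1) l l ** emat t l l = mat 1"
        if "\<bar>t\<bar> < 1/2" for t
      proof -
        have "1 + t \<noteq> 0" using that by auto
        then show ?thesis
          by (intro conjI emat_diag) (simp_all add: field_simps)
      qed
    qed auto
  qed
  have T: "(transpose A ** B) $ i $ j = (\<Sum>m\<in>UNIV. A$m$i * B$m$j)" for A :: "real^'r^'n1" and B :: "real^'r^'n1" and i j
    by (simp add: matrix_matrix_mult_def transpose_def)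
  have T2: "(transpose A ** B) $ i $ j = (\<Sum>m\<in>UNIV. A$m$i * B$m$j)" for A :: "real^'r^'n2" and B :: "real^'r^'n2" and i j
    by (simp add: matrix_matrix_mult_def transpose_def)
  show ?thesis
    unfolding vec_eq_iff T T2
    using E by (simp add: mult.commute)
qed

end
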